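(* Let $n\ge 1$. Suppose $\eta_{t+1}\le\eta_t$ for all $t=1,\ldots,n-1$, suppose the base algorithm $\mathcal{A}$ satisfies the regret bound $(\ast)$, and suppose the transition path $T_n\in\mathcal{T}_n$ is covered by a transition path $\widehat{T}_n=(\hat t_1,\ldots,\hat t_{C(\widehat{T}_n)};n)\in\mathcal{T}_n$ with $w_n(\widehat{T}_n)>0$ (with $\hat t_0=1$, $\hat t_{C(\widehat T_n)+1}=n+1$). (a) If $\ell$ is convex in its first argument and takes values in $[0,1]$, then for every meta expert $(T_n,a)$ the forecaster of Algorithm 1 satisfies \[ \widehat L_n - L_n(T_n,a)\le \sum_{c=0}^{C(\widehat T_n)}\rho_{\mathcal E}(\hat t_{c+1}-\hat t_c)+\sum_{t=1}^n\frac{\eta_t}{8}+\frac{1}{\eta_n}\ln\frac{1}{w_n(\widehat T_n)} \le (C(\widehat T_n)+1)\,\rho_{\mathcal E}\!\left(\frac{n}{C(\widehat T_n)+1}\right)+\sum_{t=1}^n\frac{\eta_t}{8}+\frac{1}{\eta_n}\ln\frac{1}{w_n(\widehat T_n)}. \] (b) If $\ell$ is exp-concave for the value $\eta>0$ and Algorithm 1 is used with $\eta_t=\eta$ for all $t$, then for every meta expert $(T_n,a)$ \[ \widehat L_n - L_n(T_n,a)\le \sum_{c=0}^{C(\widehat T_n)}\rho_{\mathcal E}(\hat t_{c+1}-\hat t_c)+\frac{1}{\eta}\ln\frac{1}{w_n(\widehat T_n)} \le (C(\widehat T_n)+1)\,\rho_{\mathcal E}\!\left(\frac{n}{C(\widehat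 T_n)+1}\right)+\frac{1}{\eta}\ln\frac{1}{w_n(\widehat T_n)}. \]
   Context: Online prediction setting: $\mathcal D$ is a convex subset of a vector space, $\mathcal Y$ a set, and $\ell:\mathcal D\times\mathcal Y\to\mathbb R$ a loss function convex in its first argument. $\mathcal E$ is a set of base experts. In each round $t=1,2,\ldots$ the environment chooses an outcome $y_t\in\mathcal Y$ and advice $f_{i,t}\in\mathcal D$ for each $i\in\mathcal E$; the advice is revealed, the forecaster outputs $\widehat p_t\in\mathcal D$, then $y_t$ is revealed. $\widehat L_n=\sum_{t=1}^n\ell(\widehat p_t,y_t)$, and for $1\le t_1\le t_2$, $L_i(t_1,t_2)=\sum_{t=t_1}^{t_2-1}\ell(f_{i,t},y_t)$. The loss is exp-concave for $\eta>0$ if $p\mapsto e^{-\eta\ell(p,y)}$ is concave for every fixed $y$. Base algorithm: $\mathcal A$ is a forecasting algorithm in this protocol satisfying the regret bound $(\ast)$: for every $n$ and every sequence of outcomes and advice, the cumulative loss of $\mathcal A$ over $n$ rounds minus $\min_{i\in\mathcal E}$ of the cumulative loss of expert $i$ is at most $\rho_{\mathcal E}(n)$, where $\rho_{\mathcal E}:[0,\infty)\to[0,\infty)$ is nondecreasing, concave and $\rho_{\mathcal E}(0)=0$. For $t_1<t_2$, $L_{\mathcal A}(t_1,t_2)$ denotes the loss of a fresh instance of $\mathcal A$ started at time $t_1$ and run on rounds $t_1,\ldots,t_2-1$. Transition paths: $\mathcal T_t$ is the set of vectors $T=(t_1,\ldots,t_C;t)$ with $C\ge 0$ and $1<t_1<\cdots<t_C\le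 t$; $C(T)=C$ is the number of switches, and $t_0:=1$, $t_{C+1}:=t+1$. A meta expert $(T,a)$ with $T\in\mathcal T_n$ and $a=(i_0,\ldots,i_C)\in\mathcal E^{C+1}$ follows expert $i_c$ on $[t_c,t_{c+1})$; its loss is $L_n(T,a)=\sum_{c=0}^C L_{i_c}(t_c,t_{c+1})$. For $t\le n$ the truncation of $T\in\mathcal T_n$ is $T_t=(t_1,\ldots,t_k;t)$ where $t_k\le t<t_{k+1}$, and $\tau_t(T)=t_k$. $\widehat T$ covers $T$ if every switch point of $T$ is a switch point of $\widehat T$. The algorithm $(\mathcal A,T)$ runs $\mathcal A$ restarting it at each $t_c$; its prediction at time $t$ is $f_{\mathcal A,t}(\tau_t(T))$, the output at time $t$ of an instance of $\mathcal A$ started at time $\tau_t(T)$; $L_t(\mathcal A,T)$ denotes its cumulative loss through time $t$, with $L_0(\mathcal A,T_0)=0$ for the empty path $T_0$. Weight functions: $w_t:\mathcal T_t\to[0,1]$ is a probability distribution on $\mathcal T_t$ for each $t$, and the family is consistent: $w_t(T_t)=\sum_{T'\in\mathcal T_{t+1}:T'_t=T_t}w_{t+1}(T')$; $w_0(T_0)=1$. Algorithm 1 (inputs $\mathcal A$, $\{w_t\}$, learning parameters $\eta_t>0$): for $t=1,\ldots,n$ predict $\widehat p_t=\dfrac{\sum_{T\in\mathcal T_t}w_t(T)e^{-\eta_tL_{t-1}(\mathcal A,T_{t-1})}f_{\mathcal A,t}(\tau_t(T))}{\sum_{T\in\mathcal T_t}w_t(T)e^{-\eta_tL_{t-1}(\mathcal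 A,T_{t-1})}}$. *)

theory Defs
  imports "HOL-Analysis.Analysis"
begin

text \<open>Transition paths T = (t_1,...,t_C; t) are represented by the strictly increasing
  list [t_1,...,t_C] of switch points; the horizon t is passed separately.\<close>

definition paths :: "nat \<Rightarrow> nat list set" where
  "paths t = {T. sorted_wrt (<) T \<and> set T \<subseteq> {2..t}}"

definition trunc :: "nat list \<Rightarrow> nat \<Rightarrow> nat list" where
  "trunc T t = filter (\<lambda>s. s \<le> t) T"

definition tau :: "nat list \<Rightarrow> nat \<Rightarrow> nat" where
  "tau T t = last (1 # trunc T t)"

definition bnd :: "nat list \<Rightarrow> nat \<Rightarrow> nat \<Rightarrow> nat" where
  "bnd T t c = (if c = 0 then 1 else if c \<le> length T then T ! (c - 1) else t + 1)"

definition covers :: "nat list \<Rightarrow> nat list \<Rightarrow> bool" where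
  "covers Th T \<longleftrightarrow> set T \<subseteq> set Th"

text \<open>A forecasting algorithm is a map from the history (past outcomes y_r..y_{t-1}
  and advice vectors f_r..f_t) to a prediction. fA A y f r t is the output at time t of
  an instance of A started at time r.\<close>
definition fA :: "('y list \<Rightarrow> ('e \<Rightarrow> 'd) list \<Rightarrow> 'd) \<Rightarrow> (nat \<Rightarrow> 'y) \<Rightarrow> (nat \<Rightarrow> 'e \<Rightarrow> 'd)
    \<Rightarrow> nat \<Rightarrow> nat \<Rightarrow> 'd" where
  "fA A y f r t = A (map y [r..<t]) (map f [r..<Suc t])"

definition regret_bound :: "'d set \<Rightarrow> ('d \<Rightarrow> 'y \<Rightarrow> real)
    \<Rightarrow> ('y list \<Rightarrow> ('e::finite \<Rightarrow> 'd) list \<Rightarrow> 'd) \<Rightarrow> (real \<Rightarrow> real) \<Rightarrow> bool" where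
  "regret_bound D loss A \<rho> \<longleftrightarrow>
     (\<forall>n ys (fs :: nat \<Rightarrow> 'e \<Rightarrow> 'd). (\<forall>t\<ge>1. \<forall>i. fs t i \<in> D) \<longrightarrow>
        (\<Sum>t=1..n. loss (fA A ys fs 1 t) (ys t)) - (MIN i. \<Sum>t=1..n. loss (fs t i) (ys t))
          \<le> \<rho> (real n))"

definition valid_algorithm :: "'d set \<Rightarrow> ('y list \<Rightarrow> ('e \<Rightarrow> 'd) list \<Rightarrow> 'd) \<Rightarrow> bool" where
  "valid_algorithm D A \<longleftrightarrow>
     (\<forall>ys fs. length fs = Suc (length ys) \<and> (\<forall>g\<in>set fs. \<forall>i. g i \<in> D) \<longrightarrow> A ys fs \<in> D)"

definition weights_ok :: "(nat \<Rightarrow> nat list \<Rightarrow> real) \<Rightarrow> bool" where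
  "weights_ok w \<longleftrightarrow> w 0 [] = 1 \<and>
     (\<forall>t. (\<forall>T\<in>paths t. 0 \<le> w t T \<and> w t T \<le> 1) \<and> (\<Sum>T\<in>paths t. w t T) = 1 \<and>
          (\<forall>T\<in>paths t. w t T = (\<Sum>T'\<in>{T' \<in> paths (Suc t). trunc T' t = T}. w (Suc t) T')))"

definition LA :: "('d \<Rightarrow> 'y \<Rightarrow> real) \<Rightarrow> ('y list \<Rightarrow> ('e \<Rightarrow> 'd) list \<Rightarrow> 'd) \<Rightarrow> (nat \<Rightarrow> 'y)
    \<Rightarrow> (nat \<Rightarrow> 'e \<Rightarrow> 'd) \<Rightarrow> nat \<Rightarrow> nat list \<Rightarrow> real" where
  "LA loss A y f t T = (\<Sum>s=1..t. loss (fA A y f (tau T s) s) (y s))"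

definition alg1 :: "('d::real_vector \<Rightarrow> 'y \<Rightarrow> real) \<Rightarrow> ('y list \<Rightarrow> ('e \<Rightarrow> 'd) list \<Rightarrow> 'd)
    \<Rightarrow> (nat \<Rightarrow> nat list \<Rightarrow> real) \<Rightarrow> (nat \<Rightarrow> real) \<Rightarrow> (nat \<Rightarrow> 'y) \<Rightarrow> (nat \<Rightarrow> 'e \<Rightarrow> 'd)
    \<Rightarrow> nat \<Rightarrow> 'd" where
  "alg1 loss A w \<eta> y f t =
     (1 / (\<Sum>T\<in>paths t. w t T * exp (- \<eta> t * LA loss A y f (t - 1) (trunc T (t - 1)))))
     *\<^sub>R (\<Sum>T\<in>paths t. (w t T * exp (- \<eta> t * LA loss A y f (t - 1) (trunc T (t - 1))))
            *\<^sub>R fA A y f (tau T t) t)"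

definition Lhat :: "('d::real_vector \<Rightarrow> 'y \<Rightarrow> real) \<Rightarrow> ('y list \<Rightarrow> ('e \<Rightarrow> 'd) list \<Rightarrow> 'd)
    \<Rightarrow> (nat \<Rightarrow> nat list \<Rightarrow> real) \<Rightarrow> (nat \<Rightarrow> real) \<Rightarrow> (nat \<Rightarrow> 'y) \<Rightarrow> (nat \<Rightarrow> 'e \<Rightarrow> 'd)
    \<Rightarrow> nat \<Rightarrow> real" where
  "Lhat loss A w \<eta> y f n = (\<Sum>t=1..n. loss (alg1 loss A w \<eta> y f t) (y t))"

definition meta_loss :: "('d \<Rightarrow> 'y \<Rightarrow> real) \<Rightarrow> (nat \<Rightarrow> 'y) \<Rightarrow> (nat \<Rightarrow> 'e \<Rightarrow> 'd)
    \<Rightarrow> nat \<Rightarrow> nat list \<Rightarrow> 'e list \<Rightarrow> real" where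
  "meta_loss loss y f n T a =
     (\<Sum>c=0..length T. \<Sum>s\<in>{bnd T n c..<bnd T n (Suc c)}. loss (f s (a ! c)) (y s))"

definition exp_concave :: "'d::real_vector set \<Rightarrow> ('d \<Rightarrow> 'y \<Rightarrow> real) \<Rightarrow> real \<Rightarrow> bool" where
  "exp_concave D loss \<eta> \<longleftrightarrow> (\<forall>y. concave_on D (\<lambda>p. exp (- \<eta> * loss p y)))"

end

theory Submission
  imports Defs "HOL-Probability.Hoeffding"
begin

lemma paths_finite: "finite (paths t)"
proof -
  have "paths t \<subseteq> {xs. set xs \<subseteq> {2..t} \<and> length xs \<le> t}"
  proof
    fix xs assume "xs \<in> paths t"
    hence d: "distinct xs" and s: "set xs \<subseteq> {2..t}"
      by (auto simp: paths_def sorted_wrt_iff_nth_less distinct_conv_nth) (metis less_irrefl not_less_iff_gr_or_eq)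
    have "length xs = card (set xs)" using d by (simp add: distinct_card)
    also have "\<dots> \<le> card {2..t}" using s by (intro card_mono) auto
    finally show "xs \<in> {xs. set xs \<subseteq> {2..t} \<and> length xs \<le> t}" using s by auto
  qed
  moreover have "finite {xs. set xs \<subseteq> {2..t} \<and> length xs \<le> t}"
    by (rule finite_lists_length_le) auto
  ultimately show ?thesis by (rule finite_subset)
qed

lemma filter_le_sorted: "sorted_wrt (<) P \<Longrightarrow> filter (\<lambda>x. x \<le> s) P = takeWhile (\<lambda>x. x \<le> (s::nat)) P"
proof (induction P)
  case (Cons a P)
  show ?case
  proof (cases "a \<le> s")
    case True with Cons show ?thesis by simp
  next
    case False
    with Cons.prems have "filter (\<lambda>x. x \<le> s) P = []" by (auto simp: filter_empty_conv)
    with False show ?thesis by simp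
  qed
qed simp

lemma len_trunc_iff:
  assumes "sorted_wrt (<) P" "c \<le> length P"
  shows "length (filter (\<lambda>x. x \<le> (s::nat)) P) = c \<longleftrightarrow> (c = 0 \<or> P!(c-1) \<le> s) \<and> (c = length P \<or> s < P!c)"
  using assms
proof (induction P arbitrary: c)
  case Nil thus ?case by simp
next
  case (Cons x P)
  have allgt: "\<forall>z\<in>set P. x < z" using Cons.prems(1) by simp
  show ?case
  proof (cases "x \<le> s")
    case False
    hence fe: "filter (\<lambda>x. x \<le> s) (x#P) = []" using allgt by (auto simp: filter_empty_conv)
    show ?thesis
    proof (cases c)
      case 0 thus ?thesis using fe False by simp
    next
      case (Suc c')
      have "(x#P)!c' \<ge> x"
      proof (cases c')
        case (Suc c'') hence "P!c'' \<in> set P" using Cons.prems(2) \<open>c = Suc c'\<close> by simp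
        thus ?thesis using allgt Suc by fastforce
      qed simp
      thus ?thesis using fe False Suc by simp
    qed
  next
    case True
    have fc: "filter (\<lambda>x. x \<le> s) (x#P) = x # filter (\<lambda>x. x \<le> s) P" using True by simp
    show ?thesis
    proof (cases c)
      case 0 thus ?thesis using True fc by simp
    next
      case (Suc c')
      have ih: "length (filter (\<lambda>x. x \<le> s) P) = c' \<longleftrightarrow> (c' = 0 \<or> P!(c'-1) \<le> s) \<and> (c' = length P \<or> s < P!c')"
        using Cons.IH[of c'] Cons.prems Suc by simp
      have "(c = 0 \<or> (x#P)!(c-1) \<le> s) \<longleftrightarrow> (c' = 0 \<or> P!(c'-1) \<le> s)"
        using Suc True by (cases c') auto
      moreover have "(c = length (x#P) \<or> s < (x#P)!c) \<longleftrightarrow> (c' = length P \<or> s < P!c')"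
        using Suc by simp
      ultimately show ?thesis using fc ih Suc by simp
    qed
  qed
qed

definition idx :: "nat list \<Rightarrow> nat \<Rightarrow> nat" where "idx P s = length (trunc P s)"

lemma idx_le: "idx P s \<le> length P" unfolding idx_def trunc_def by simp

lemma tau_idx:
  assumes "sorted_wrt (<) P"
  shows "tau P s = bnd P n (idx P s)"
proof -
  let ?k = "idx P s"
  have tw: "trunc P s = take ?k P"
    unfolding idx_def trunc_def using assms filter_le_sorted takeWhile_eq_take by metis
  show ?thesis
  proof (cases "?k = 0")
    case True thus ?thesis using tw by (simp add: tau_def bnd_def)
  next
    case False
    have "?k \<le> length P" by (rule idx_le)
    hence "last (take ?k P) = P ! (?k - 1)" using False
      by (subst last_conv_nth) (auto simp: min_def)
    moreover have "trunc P s \<noteq> []" using False unfolding idx_def by auto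
    ultimately show ?thesis using False tw \<open>?k \<le> length P\<close> by (simp add: tau_def bnd_def)
  qed
qed

lemma seg_eq:
  assumes P: "P \<in> paths n" and c: "c \<le> length P"
  shows "{s\<in>{1..n}. idx P s = c} = {bnd P n c..<bnd P n (Suc c)}"
proof -
  have so: "sorted_wrt (<) P" and sP: "set P \<subseteq> {2..n}"
    using P by (auto simp: paths_def)
  have rng: "\<And>j. j < length P \<Longrightarrow> P!j \<in> {2..n}"
    using sP nth_mem by blast
  have iff: "\<And>s. idx P s = c \<longleftrightarrow> (c = 0 \<or> P!(c-1) \<le> s) \<and> (c = length P \<or> s < P!c)"
    unfolding idx_def trunc_def using len_trunc_iff[OF so c] by blast
  show ?thesis
  proof (intro set_eqI iffI)
    fix s assume "s \<in> {s\<in>{1..n}. idx P s = c}"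
    thus "s \<in> {bnd P n c..<bnd P n (Suc c)}" using iff[of s] c
      by (auto simp: bnd_def)
  next
    fix s assume s: "s \<in> {bnd P n c..<bnd P n (Suc c)}"
    have "1 \<le> s"
    proof (cases c)
      case (Suc c') thus ?thesis using s rng[of c'] c by (auto simp: bnd_def)
    qed (use s in \<open>auto simp: bnd_def\<close>)
    moreover have "s \<le> n"
    proof (cases "c < length P")
      case True thus ?thesis using s rng[of c] by (auto simp: bnd_def)
    next
      case False thus ?thesis using s c by (auto simp: bnd_def)
    qed
    moreover have "idx P s = c" using iff[of s] s c
      by (auto simp: bnd_def split: if_splits)
    ultimately show "s \<in> {s\<in>{1..n}. idx P s = c}" by auto
  qed
qed

lemma sum_decomp:
  assumes P: "P \<in> paths n"
  shows "(\<Sum>s=1..n. g s) = (\<Sum>c=0..length P. \<Sum>s\<in>{bnd P n c..<bnd P n (Suc c)}. g s)"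
proof -
  have "(\<Sum>c=0..length P. \<Sum>s\<in>{s\<in>{1..n}. idx P s = c}. g s) = (\<Sum>s=1..n. g s)"
    by (rule sum.group) (auto simp: idx_le)
  thus ?thesis using seg_eq[OF P] by simp
qed

lemma tau_self:
  assumes "sorted_wrt (<) P" "x \<in> set P"
  shows "tau P x = x"
proof -
  obtain u v where P: "P = u @ x # v" using assms(2) split_list by metis
  have "\<forall>z\<in>set u. z < x" "\<forall>z\<in>set v. x < z" using assms(1) P by (auto simp: sorted_wrt_append)
  hence "filter (\<lambda>z. z \<le> x) P = filter (\<lambda>z. z \<le> x) u @ [x]" using P
    by (auto simp: filter_empty_conv)
  thus ?thesis by (simp add: tau_def trunc_def)
qed

lemma cover_trunc:
  assumes Th: "Th \<in> paths n" and cov: "set T \<subseteq> set Th" and c: "c \<le> length Th"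
    and s: "s \<in> {bnd Th n c..<bnd Th n (Suc c)}"
  shows "trunc T s = trunc T (bnd Th n c)"
  unfolding trunc_def
proof (rule filter_cong[OF refl])
  fix x assume x: "x \<in> set T"
  have so: "sorted_wrt (<) Th" using Th by (auto simp: paths_def)
  show "x \<le> s \<longleftrightarrow> x \<le> bnd Th n c"
  proof
    assume xs: "x \<le> s"
    show "x \<le> bnd Th n c"
    proof (rule ccontr)
      assume "\<not> x \<le> bnd Th n c"
      hence xin: "x \<in> {bnd Th n c..<bnd Th n (Suc c)}" using xs s by auto
      hence "idx Th x = c" using seg_eq[OF Th c] by blast
      hence "tau Th x = bnd Th n c" using tau_idx[OF so, of x n] by simp
      moreover have "tau Th x = x" using tau_self[OF so] x cov by auto
      ultimately show False using \<open>\<not> x \<le> bnd Th n c\<close> by simp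
    qed
  qed (use s in auto)
qed

lemma fA_in_D:
  assumes "valid_algorithm D A" "\<forall>t\<ge>1. \<forall>i. f t i \<in> D" "1 \<le> r" "r \<le> t"
  shows "fA A y f r t \<in> D"
  unfolding fA_def
proof (rule assms(1)[unfolded valid_algorithm_def, rule_format], intro conjI ballI allI)
  show "length (map f [r..<Suc t]) = Suc (length (map y [r..<t]))" using assms(4) by simp
next
  fix g i assume "g \<in> set (map f [r..<Suc t])"
  then obtain k where "k \<ge> r" "g = f k" by auto
  thus "g i \<in> D" using assms(2,3) by auto
qed

lemma tau_range:
  assumes "\<forall>x\<in>set T. 1 \<le> x" "1 \<le> t"
  shows "1 \<le> tau T t \<and> tau T t \<le> t"
proof -
  have "tau T t \<in> set (1 # trunc T t)" unfolding tau_def by (rule last_in_set) simp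
  thus ?thesis using assms by (auto simp: trunc_def)
qed

lemma map_shift: "map (\<lambda>k. g (k + d)) [a..<b] = map g [a + d..<b + d]"
  by (rule nth_equalityI) (auto simp: add.commute add.left_commute)

lemma regret_seg:
  fixes loss :: "'d \<Rightarrow> 'y \<Rightarrow> real" and A :: "'y list \<Rightarrow> ('e::finite \<Rightarrow> 'd) list \<Rightarrow> 'd"
  assumes reg: "regret_bound D loss A \<rho>" and adv: "\<forall>t\<ge>1. \<forall>i. f t i \<in> D" and r: "r \<ge> 1"
  shows "(\<Sum>s\<in>{r..<r+m}. loss (fA A y f r s) (y s)) - (\<Sum>s\<in>{r..<r+m}. loss (f s i) (y s)) \<le> \<rho> (real m)"
proof -
  define d where "d = r - 1"
  define ys where "ys = (\<lambda>k. y (k + d))"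
  define fs where "fs = (\<lambda>k. f (k + d))"
  have fsD: "\<forall>t\<ge>1. \<forall>i. fs t i \<in> D" using adv by (auto simp: fs_def)
  have R: "(\<Sum>t=1..m. loss (fA A ys fs 1 t) (ys t)) - (MIN i. \<Sum>t=1..m. loss (fs t i) (ys t)) \<le> \<rho> (real m)"
    using reg[unfolded regret_bound_def, rule_format, where n=m and ys=ys and fs=fs] fsD by blast
  have "(MIN i. \<Sum>t=1..m. loss (fs t i) (ys t)) \<le> (\<Sum>t=1..m. loss (fs t i) (ys t))"
    by (rule Min_le) auto
  moreover have fAeq: "fA A ys fs 1 t = fA A y f r (t + d)" for t
    unfolding fA_def ys_def fs_def map_shift[of y d] map_shift[of f d]
    using r by (simp add: d_def)
  have reidx: "(\<Sum>t=1..m. g (t + d)) = (\<Sum>s\<in>{r..<r+m}. g s)" for g :: "nat \<Rightarrow> real"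
  proof -
    have "(\<Sum>t=1..m. g (t + d)) = (\<Sum>s\<in>{1+d..m+d}. g s)"
      by (rule sum.shift_bounds_cl_nat_ivl[symmetric])
    moreover have "{1+d..m+d} = {r..<r+m}" using r by (auto simp: d_def)
    ultimately show ?thesis by simp
  qed
  have "(\<Sum>t=1..m. loss (fA A ys fs 1 t) (ys t)) = (\<Sum>s\<in>{r..<r+m}. loss (fA A y f r s) (y s))"
    using reidx[of "\<lambda>s. loss (fA A y f r s) (y s)"] by (simp only: fAeq) (simp add: ys_def)
  moreover have "(\<Sum>t=1..m. loss (fs t i) (ys t)) = (\<Sum>s\<in>{r..<r+m}. loss (f s i) (y s))"
    using reidx[of "\<lambda>s. loss (f s i) (y s)"] by (simp add: fs_def ys_def)
  ultimately show ?thesis using R by linarith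
qed

lemma LA_zero: "LA loss A y f 0 T = 0" by (simp add: LA_def)

lemma LA_step:
  "LA loss A y f (Suc t) T = LA loss A y f t (trunc T t) + loss (fA A y f (tau T (Suc t)) (Suc t)) (y (Suc t))"
proof -
  have "tau (trunc T t) s = tau T s" if "s \<in> {1..t}" for s
  proof -
    have "filter (\<lambda>x. x \<le> s) (filter (\<lambda>x. x \<le> t) T) = filter (\<lambda>x. x \<le> s) T"
      using that by (auto simp: filter_filter intro!: filter_cong)
    thus ?thesis by (simp add: tau_def trunc_def)
  qed
  thus ?thesis unfolding LA_def by (simp add: sum.cl_ivl_Suc)
qed

lemma trunc_paths: "T \<in> paths (Suc t) \<Longrightarrow> trunc T t \<in> paths t"
  by (auto simp: paths_def trunc_def sorted_wrt_filter)

lemma consist: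
  assumes "weights_ok w"
  shows "(\<Sum>T'\<in>paths (Suc t). w (Suc t) T' * h (trunc T' t)) = (\<Sum>T\<in>paths t. w t T * h T)"
proof -
  have "(\<Sum>T'\<in>paths (Suc t). w (Suc t) T' * h (trunc T' t))
      = (\<Sum>T\<in>paths t. \<Sum>T'\<in>{T'\<in>paths (Suc t). trunc T' t = T}. w (Suc t) T' * h (trunc T' t))"
    by (rule sum.group[symmetric]) (auto simp: paths_finite trunc_paths)
  also have "\<dots> = (\<Sum>T\<in>paths t. (\<Sum>T'\<in>{T'\<in>paths (Suc t). trunc T' t = T}. w (Suc t) T') * h T)"
    by (auto simp: sum_distrib_right intro!: sum.cong)
  also have "\<dots> = (\<Sum>T\<in>paths t. w t T * h T)"
    using assms unfolding weights_ok_def by (auto intro!: sum.cong)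
  finally show ?thesis .
qed

lemma hoeff_fin:
  fixes q x :: "'a \<Rightarrow> real"
  assumes S: "finite S" and q: "\<forall>i\<in>S. q i \<ge> 0" "sum q S = 1" and x: "\<forall>i\<in>S. 0 \<le> x i \<and> x i \<le> 1" and h: "h > 0"
  shows "ln (\<Sum>i\<in>S. q i * exp (-h * x i)) \<le> -h * (\<Sum>i\<in>S. q i * x i) + h^2/8"
proof -
  define p where "p = (\<Sum>i\<in>S. q i * x i)"
  have p01: "0 \<le> p" "p \<le> 1"
  proof -
    show "0 \<le> p" unfolding p_def using q x by (auto intro!: sum_nonneg)
    have "p \<le> (\<Sum>i\<in>S. q i)" unfolding p_def using q x by (intro sum_mono) (simp add: mult_left_le)
    thus "p \<le> 1" using q by simp
  qed
  have pt: "exp (-h * x i) \<le> (1 - x i) + x i * exp (-h)" if "i \<in> S" for i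
  proof -
    have "exp ((1 - x i) *\<^sub>R 0 + x i *\<^sub>R (-h)) \<le> (1 - x i) * exp 0 + x i * exp (-h)"
      using x that by (intro convex_onD[OF exp_convex]) auto
    thus ?thesis by (simp add: mult.commute)
  qed
  have "(\<Sum>i\<in>S. q i * exp (-h * x i)) \<le> (\<Sum>i\<in>S. q i * ((1 - x i) + x i * exp (-h)))"
    using q pt by (auto intro!: sum_mono mult_left_mono)
  also have "\<dots> = (\<Sum>i\<in>S. q i - q i * x i + exp (-h) * (q i * x i))"
    by (rule sum.cong) (simp_all add: algebra_simps)
  also have "\<dots> = 1 - p + p * exp (-h)"
    using q by (simp add: p_def sum.distrib sum_subtractf sum_distrib_left[symmetric] mult.commute)
  finally have le: "(\<Sum>i\<in>S. q i * exp (-h * x i)) \<le> 1 - p + p * exp (-h)" .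
  have pos: "(\<Sum>i\<in>S. q i * exp (-h * x i)) > 0"
  proof -
    have "S \<noteq> {}" using q by auto
    then obtain j where "j \<in> S" "q j > 0" using q
      by (metis less_eq_real_def sum.neutral zero_neq_one)
    hence "0 < q j * exp (-h * x j)" by simp
    also have "\<dots> \<le> (\<Sum>i\<in>S. q i * exp (-h * x i))"
      using \<open>j \<in> S\<close> S q by (intro member_le_sum) auto
    finally show ?thesis .
  qed
  have eq: "1 - p + p * exp (-h) = exp (-h) * (1 + (1 - p) * (exp h - 1))"
  proof -
    have "exp (-h) * exp h = 1" by (simp add: exp_minus field_simps)
    thus ?thesis by algebra
  qed
  have pos2: "1 + (1 - p) * (exp h - 1) > 0" using p01 h
    by (smt (verit) exp_ge_zero mult_nonneg_nonneg one_le_exp_iff)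
  have "ln (\<Sum>i\<in>S. q i * exp (-h * x i)) \<le> ln (1 - p + p * exp (-h))"
    using le pos by simp
  also have "\<dots> = -h + ln (1 + (1 - p) * (exp h - 1))"
    using pos2 by (simp add: eq ln_mult)
  also have "\<dots> \<le> -h * p + h^2/8"
    using Hoeffdings_lemma_aux[of h "1 - p"] h p01 by (simp add: algebra_simps)
  finally show ?thesis unfolding p_def .
qed

lemma power_mean_step:
  fixes q z :: "'a \<Rightarrow> real"
  assumes S: "finite S" "S \<noteq> {}" and q: "\<forall>i\<in>S. q i \<ge> 0" "sum q S = 1" and z: "\<forall>i\<in>S. z i > 0"
    and a: "0 < a" "a \<le> b"
  shows "(1 / a) * ln (\<Sum>i\<in>S. q i * z i) \<le> (1 / b) * ln (\<Sum>i\<in>S. q i * z i powr (b / a))"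
proof -
  define W where "W = (\<Sum>i\<in>S. q i * z i)"
  define V where "V = (\<Sum>i\<in>S. q i * z i powr (b / a))"
  have r: "b / a \<ge> 1" using a by simp
  have pos: "W > 0"
  proof -
    obtain j where "j \<in> S" "q j > 0" using q
      by (metis less_eq_real_def sum.neutral zero_neq_one)
    hence "0 < q j * z j" using z by simp
    also have "\<dots> \<le> W" unfolding W_def
      using \<open>j \<in> S\<close> S q z by (intro member_le_sum) (auto intro: less_imp_le)
    finally show ?thesis .
  qed
  have J0: "(\<Sum>i\<in>S. q i *\<^sub>R z i) powr (b / a) \<le> (\<Sum>i\<in>S. q i * z i powr (b / a))"
    by (rule convex_on_sum[OF S powr_convex[OF r]]) (use q z in auto)
  have J: "W powr (b / a) \<le> V" using J0 by (simp add: W_def V_def)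
  have pp: "0 < W powr (b / a)" using pos by simp
  have "ln (W powr (b / a)) \<le> ln V"
  proof -
    have V0: "0 < V" using J pp by linarith
    show ?thesis using ln_le_cancel_iff[OF pp V0] J by blast
  qed
  moreover have "ln (W powr (b / a)) = (b / a) * ln W"
    using pos by (simp add: ln_powr)
  ultimately have L: "(b / a) * ln W \<le> ln V" by simp
  have "(1 / a) * ln W = (1 / b) * ((b / a) * ln W)" using a by simp
  also have "\<dots> \<le> (1 / b) * ln V" using L a by (intro mult_left_mono) auto
  finally show ?thesis by (simp add: W_def V_def)
qed

lemma bnd_props:
  assumes P: "P \<in> paths n" and c: "c \<le> length P"
  shows "1 \<le> bnd P n c" "bnd P n c \<le> bnd P n (Suc c)"
proof -
  have so: "sorted_wrt (<) P" and sP: "set P \<subseteq> {2..n}" using P by (auto simp: paths_def)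
  have rng: "\<And>j. j < length P \<Longrightarrow> P!j \<in> {2..n}" using sP nth_mem by blast
  show "1 \<le> bnd P n c"
  proof (cases c)
    case (Suc c') thus ?thesis using rng[of c'] c by (auto simp: bnd_def)
  qed (simp add: bnd_def)
  show "bnd P n c \<le> bnd P n (Suc c)"
  proof (cases "c < length P")
    case True
    show ?thesis
    proof (cases c)
      case 0 thus ?thesis using True rng[of 0] by (auto simp: bnd_def)
    next
      case (Suc c')
      have "P!c' < P!c" using so True Suc by (simp add: sorted_wrt_iff_nth_less)
      thus ?thesis using True Suc by (simp add: bnd_def)
    qed
  next
    case False
    hence "c = length P" using c by simp
    thus ?thesis using rng[of "c - 1"] by (cases c) (auto simp: bnd_def)
  qed
qed

lemma seg_len_sum:
  assumes P: "P \<in> paths n"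
  shows "(\<Sum>c=0..length P. real (bnd P n (Suc c) - bnd P n c)) = real n"
  using sum_decomp[OF P, of "\<lambda>_. (1::real)"] by simp

lemma rho_jensen:
  fixes \<rho> :: "real \<Rightarrow> real"
  assumes conc: "concave_on {0..} \<rho>" and S: "finite S" "S \<noteq> {}" and x: "\<forall>c\<in>S. x c \<ge> 0"
  shows "(\<Sum>c\<in>S. \<rho> (x c)) \<le> real (card S) * \<rho> ((\<Sum>c\<in>S. x c) / real (card S))"
proof -
  define k where "k = real (card S)"
  have k: "k > 0" using S by (simp add: k_def card_gt_0_iff)
  have "(\<Sum>c\<in>S. (1/k) * \<rho> (x c)) \<le> \<rho> (\<Sum>c\<in>S. (1/k) *\<^sub>R x c)"
    by (rule concave_on_sum[OF S conc]) (use x k in \<open>auto simp: k_def\<close>)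
  hence "(1/k) * (\<Sum>c\<in>S. \<rho> (x c)) \<le> \<rho> ((\<Sum>c\<in>S. x c) / k)"
    by (simp add: sum_distrib_left[symmetric] sum_divide_distrib)
  hence "k * ((1/k) * (\<Sum>c\<in>S. \<rho> (x c))) \<le> k * \<rho> ((\<Sum>c\<in>S. x c) / k)"
    using k by (intro mult_left_mono) auto
  thus ?thesis using k by (simp add: k_def)
qed

lemma meta_loss_alt:
  assumes T: "T \<in> paths n"
  shows "meta_loss loss y f n T a = (\<Sum>s=1..n. loss (f s (a ! idx T s)) (y s))"
proof -
  have "(\<Sum>s=1..n. loss (f s (a ! idx T s)) (y s))
      = (\<Sum>c=0..length T. \<Sum>s\<in>{bnd T n c..<bnd T n (Suc c)}. loss (f s (a ! idx T s)) (y s))"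
    by (rule sum_decomp[OF T])
  also have "\<dots> = (\<Sum>c=0..length T. \<Sum>s\<in>{bnd T n c..<bnd T n (Suc c)}. loss (f s (a ! c)) (y s))"
  proof (intro sum.cong refl)
    fix c s assume c: "c \<in> {0..length T}" and s: "s \<in> {bnd T n c..<bnd T n (Suc c)}"
    have "c \<le> length T" using c by simp
    hence "s \<in> {s\<in>{1..n}. idx T s = c}" using seg_eq[OF T] s by blast
    hence "idx T s = c" by blast
    thus "loss (f s (a ! idx T s)) (y s) = loss (f s (a ! c)) (y s)" by simp
  qed
  finally have "(\<Sum>s=1..n. loss (f s (a ! idx T s)) (y s)) = meta_loss loss y f n T a"
    unfolding meta_loss_def .
  thus ?thesis by (rule sym)
qed

lemma LA_bound:
  fixes loss :: "'d \<Rightarrow> 'y \<Rightarrow> real" and A :: "'y list \<Rightarrow> ('e::finite \<Rightarrow> 'd) list \<Rightarrow> 'd"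
  assumes reg: "regret_bound D loss A \<rho>" and adv: "\<forall>t\<ge>1. \<forall>i. f t i \<in> D"
    and T: "T \<in> paths n" and Th: "Th \<in> paths n" and cov: "set T \<subseteq> set Th"
  shows "LA loss A y f n Th \<le> meta_loss loss y f n T a
           + (\<Sum>c=0..length Th. \<rho> (real (bnd Th n (Suc c) - bnd Th n c)))"
proof -
  have so: "sorted_wrt (<) Th" using Th by (auto simp: paths_def)
  have L: "LA loss A y f n Th = (\<Sum>c=0..length Th. \<Sum>s\<in>{bnd Th n c..<bnd Th n (Suc c)}. loss (fA A y f (bnd Th n c) s) (y s))"
  proof -
    have "LA loss A y f n Th = (\<Sum>c=0..length Th. \<Sum>s\<in>{bnd Th n c..<bnd Th n (Suc c)}. loss (fA A y f (tau Th s) s) (y s))"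
      unfolding LA_def by (rule sum_decomp[OF Th])
    also have "\<dots> = (\<Sum>c=0..length Th. \<Sum>s\<in>{bnd Th n c..<bnd Th n (Suc c)}. loss (fA A y f (bnd Th n c) s) (y s))"
    proof (intro sum.cong refl)
      fix c s assume c: "c \<in> {0..length Th}" and s: "s \<in> {bnd Th n c..<bnd Th n (Suc c)}"
      have "c \<le> length Th" using c by simp
      hence "s \<in> {s\<in>{1..n}. idx Th s = c}" using seg_eq[OF Th] s by blast
      hence "idx Th s = c" by blast
      hence "tau Th s = bnd Th n c" using tau_idx[OF so, of s n] by simp
      thus "loss (fA A y f (tau Th s) s) (y s) = loss (fA A y f (bnd Th n c) s) (y s)" by simp
    qed
    finally show ?thesis .
  qed
  have M: "meta_loss loss y f n T a = (\<Sum>c=0..length Th. \<Sum>s\<in>{bnd Th n c..<bnd Th n (Suc c)}.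
              loss (f s (a ! idx T (bnd Th n c))) (y s))"
  proof -
    have "meta_loss loss y f n T a = (\<Sum>c=0..length Th. \<Sum>s\<in>{bnd Th n c..<bnd Th n (Suc c)}. loss (f s (a ! idx T s)) (y s))"
      unfolding meta_loss_alt[OF T] by (rule sum_decomp[OF Th])
    also have "\<dots> = (\<Sum>c=0..length Th. \<Sum>s\<in>{bnd Th n c..<bnd Th n (Suc c)}. loss (f s (a ! idx T (bnd Th n c))) (y s))"
    proof (intro sum.cong refl)
      fix c s assume c: "c \<in> {0..length Th}" and s: "s \<in> {bnd Th n c..<bnd Th n (Suc c)}"
      have "trunc T s = trunc T (bnd Th n c)" using cover_trunc[OF Th cov _ s] c by simp
      thus "loss (f s (a ! idx T s)) (y s) = loss (f s (a ! idx T (bnd Th n c))) (y s)" by (simp add: idx_def)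
    qed
    finally show ?thesis .
  qed
  have seg: "(\<Sum>s\<in>{bnd Th n c..<bnd Th n (Suc c)}. loss (fA A y f (bnd Th n c) s) (y s))
      \<le> (\<Sum>s\<in>{bnd Th n c..<bnd Th n (Suc c)}. loss (f s (a ! idx T (bnd Th n c))) (y s))
        + \<rho> (real (bnd Th n (Suc c) - bnd Th n c))" if c: "c \<in> {0..length Th}" for c
  proof -
    have b: "1 \<le> bnd Th n c" "bnd Th n c \<le> bnd Th n (Suc c)" using bnd_props[OF Th] c by auto
    hence e: "bnd Th n (Suc c) = bnd Th n c + (bnd Th n (Suc c) - bnd Th n c)" by simp
    show ?thesis
      using regret_seg[OF reg adv b(1), where m="bnd Th n (Suc c) - bnd Th n c" and y=y and i="a ! idx T (bnd Th n c)"]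
      by (subst (1 2) e) simp
  qed
  have "LA loss A y f n Th \<le> (\<Sum>c=0..length Th. (\<Sum>s\<in>{bnd Th n c..<bnd Th n (Suc c)}. loss (f s (a ! idx T (bnd Th n c))) (y s))
        + \<rho> (real (bnd Th n (Suc c) - bnd Th n c)))"
    unfolding L by (rule sum_mono) (rule seg)
  also have "\<dots> = meta_loss loss y f n T a + (\<Sum>c=0..length Th. \<rho> (real (bnd Th n (Suc c) - bnd Th n c)))"
    unfolding M by (simp add: sum.distrib)
  finally show ?thesis .
qed

definition Wt where "Wt loss A w \<eta> y f t = (\<Sum>T\<in>paths t. w t T * exp (- \<eta> t * LA loss A y f (t - 1) (trunc T (t - 1))))"
definition Vt where "Vt loss A w \<eta> y f t = (\<Sum>T\<in>paths t. w t T * exp (- \<eta> t * LA loss A y f t T))"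

lemma w_props: "weights_ok w \<Longrightarrow> (\<forall>T\<in>paths t. 0 \<le> w t T) \<and> sum (w t) (paths t) = 1"
  unfolding weights_ok_def by blast

lemma pos_comb:
  fixes q z :: "'a \<Rightarrow> real"
  assumes S: "finite S" and q: "\<forall>i\<in>S. q i \<ge> 0" "sum q S = 1" and z: "\<forall>i\<in>S. z i > 0"
  shows "(\<Sum>i\<in>S. q i * z i) > 0"
proof -
  obtain j where "j \<in> S" "q j > 0" using q
    by (metis less_eq_real_def sum.neutral zero_neq_one)
  hence "0 < q j * z j" using z by simp
  also have "\<dots> \<le> (\<Sum>i\<in>S. q i * z i)"
    using \<open>j \<in> S\<close> S q z by (intro member_le_sum) (auto intro: less_imp_le)
  finally show ?thesis .
qed

lemma Wt_pos: "weights_ok w \<Longrightarrow> Wt loss A w \<eta> y f t > 0"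
  unfolding Wt_def by (rule pos_comb) (auto simp: paths_finite w_props)

lemma Vt_pos: "weights_ok w \<Longrightarrow> Vt loss A w \<eta> y f t > 0"
  unfolding Vt_def by (rule pos_comb) (auto simp: paths_finite w_props)

lemma Wt_1: "weights_ok w \<Longrightarrow> Wt loss A w \<eta> y f 1 = 1"
  by (simp add: Wt_def LA_zero w_props)

lemma paths_ne: "weights_ok w \<Longrightarrow> paths t \<noteq> {}"
  using w_props[of w t] by auto

lemma step_common:
  assumes w: "weights_ok w" and alg: "valid_algorithm D A" and adv: "\<forall>t\<ge>1. \<forall>i. f t i \<in> D"
  shows "\<exists>q. (\<forall>T\<in>paths (Suc t). q T \<ge> 0) \<and> sum q (paths (Suc t)) = 1
      \<and> alg1 loss A w \<eta> y f (Suc t) = (\<Sum>T\<in>paths (Suc t). q T *\<^sub>R fA A y f (tau T (Suc t)) (Suc t))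
      \<and> (\<Sum>T\<in>paths (Suc t). q T * exp (- \<eta> (Suc t) * loss (fA A y f (tau T (Suc t)) (Suc t)) (y (Suc t))))
          = Vt loss A w \<eta> y f (Suc t) / Wt loss A w \<eta> y f (Suc t)
      \<and> (\<forall>T\<in>paths (Suc t). fA A y f (tau T (Suc t)) (Suc t) \<in> D)"
proof -
  let ?P = "paths (Suc t)"
  define x where "x T = fA A y f (tau T (Suc t)) (Suc t)" for T
  define l where "l T = loss (x T) (y (Suc t))" for T
  define c where "c T = w (Suc t) T * exp (- \<eta> (Suc t) * LA loss A y f t (trunc T t))" for T
  define W where "W = Wt loss A w \<eta> y f (Suc t)"
  have W: "W = sum c ?P" by (simp add: W_def Wt_def c_def)
  have Wp: "W > 0" using Wt_pos[OF w] W_def by simp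
  define q where "q T = c T / W" for T
  have q0: "\<forall>T\<in>?P. q T \<ge> 0" using w_props[OF w] Wp by (auto simp: q_def c_def)
  have q1: "sum q ?P = 1" using Wp W by (simp add: q_def sum_divide_distrib[symmetric])
  have "alg1 loss A w \<eta> y f (Suc t) = (1 / W) *\<^sub>R (\<Sum>T\<in>?P. c T *\<^sub>R x T)"
    unfolding alg1_def W c_def x_def by simp
  also have "\<dots> = (\<Sum>T\<in>?P. q T *\<^sub>R x T)"
    by (simp add: scaleR_sum_right q_def)
  finally have a: "alg1 loss A w \<eta> y f (Suc t) = (\<Sum>T\<in>?P. q T *\<^sub>R x T)" .
  have ce: "c T * exp (- \<eta> (Suc t) * l T) = w (Suc t) T * exp (- \<eta> (Suc t) * LA loss A y f (Suc t) T)" for T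
  proof -
    have "LA loss A y f (Suc t) T = LA loss A y f t (trunc T t) + l T"
      by (simp add: LA_step l_def x_def)
    thus ?thesis by (simp add: c_def mult.assoc exp_add[symmetric] distrib_left)
  qed
  have "(\<Sum>T\<in>?P. q T * exp (- \<eta> (Suc t) * l T)) = (\<Sum>T\<in>?P. c T * exp (- \<eta> (Suc t) * l T)) / W"
    by (simp add: q_def sum_divide_distrib)
  also have "\<dots> = Vt loss A w \<eta> y f (Suc t) / W"
  proof -
    have "(\<Sum>T\<in>?P. c T * exp (- \<eta> (Suc t) * l T)) = (\<Sum>T\<in>?P. w (Suc t) T * exp (- \<eta> (Suc t) * LA loss A y f (Suc t) T))"
      by (intro sum.cong refl) (rule ce)
    thus ?thesis by (simp add: Vt_def)
  qed
  finally have v: "(\<Sum>T\<in>?P. q T * exp (- \<eta> (Suc t) * l T)) = Vt loss A w \<eta> y f (Suc t) / W" .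
  have d: "\<forall>T\<in>?P. x T \<in> D"
  proof
    fix T assume "T \<in> ?P"
    hence "\<forall>z\<in>set T. 1 \<le> z" by (auto simp: paths_def)
    hence "1 \<le> tau T (Suc t) \<and> tau T (Suc t) \<le> Suc t" by (intro tau_range) auto
    thus "x T \<in> D" unfolding x_def using fA_in_D[OF alg adv] by blast
  qed
  show ?thesis
    using q0 q1 a v d by (intro exI[of _ q]) (simp add: x_def l_def W_def)
qed

lemma step_a:
  assumes w: "weights_ok w" and lc: "\<forall>yy. convex_on D (\<lambda>p. loss p yy)"
    and alg: "valid_algorithm D A" and adv: "\<forall>t\<ge>1. \<forall>i. f t i \<in> D"
    and bnd: "\<forall>p\<in>D. \<forall>yy. 0 \<le> loss p yy \<and> loss p yy \<le> 1" and eta: "\<eta> t > 0" and t: "t \<ge> 1"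
  shows "loss (alg1 loss A w \<eta> y f t) (y t)
           \<le> (1 / \<eta> t) * (ln (Wt loss A w \<eta> y f t) - ln (Vt loss A w \<eta> y f t)) + \<eta> t / 8"
proof -
  obtain t' where t': "t = Suc t'" using t by (cases t) auto
  let ?P = "paths t"
  let ?x = "\<lambda>T. fA A y f (tau T t) t"
  obtain q where q0: "\<forall>T\<in>?P. q T \<ge> 0" and q1: "sum q ?P = 1"
    and a: "alg1 loss A w \<eta> y f t = (\<Sum>T\<in>?P. q T *\<^sub>R ?x T)"
    and v: "(\<Sum>T\<in>?P. q T * exp (- \<eta> t * loss (?x T) (y t))) = Vt loss A w \<eta> y f t / Wt loss A w \<eta> y f t"
    and d: "\<forall>T\<in>?P. ?x T \<in> D"
    using step_common[OF w alg adv, of t' loss \<eta> y] unfolding t'[symmetric] by blast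
  define p where "p = (\<Sum>T\<in>?P. q T * loss (?x T) (y t))"
  have l: "loss (alg1 loss A w \<eta> y f t) (y t) \<le> p"
    unfolding a p_def
    by (rule convex_on_sum[OF paths_finite paths_ne[OF w] lc[rule_format]]) (use q0 q1 d in auto)
  have hf: "ln (\<Sum>T\<in>?P. q T * exp (- \<eta> t * loss (?x T) (y t))) \<le> - \<eta> t * p + \<eta> t ^ 2 / 8"
    unfolding p_def by (rule hoeff_fin[OF paths_finite]) (use q0 q1 d bnd eta in auto)
  have ld: "ln (Vt loss A w \<eta> y f t / Wt loss A w \<eta> y f t) = ln (Vt loss A w \<eta> y f t) - ln (Wt loss A w \<eta> y f t)"
    using Vt_pos[OF w, of loss A \<eta> y f t] Wt_pos[OF w, of loss A \<eta> y f t] by (simp add: ln_div)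
  have h: "\<eta> t * p \<le> ln (Wt loss A w \<eta> y f t) - ln (Vt loss A w \<eta> y f t) + \<eta> t ^ 2 / 8"
    using hf unfolding v ld by linarith
  have "p \<le> (1 / \<eta> t) * (ln (Wt loss A w \<eta> y f t) - ln (Vt loss A w \<eta> y f t)) + \<eta> t / 8"
  proof -
    have "p = (1 / \<eta> t) * (\<eta> t * p)" using eta by simp
    also have "\<dots> \<le> (1 / \<eta> t) * (ln (Wt loss A w \<eta> y f t) - ln (Vt loss A w \<eta> y f t) + \<eta> t ^ 2 / 8)"
      using h eta by (intro mult_left_mono) auto
    also have "\<dots> = (1 / \<eta> t) * (ln (Wt loss A w \<eta> y f t) - ln (Vt loss A w \<eta> y f t)) + \<eta> t / 8"
      using eta by (simp add: field_simps power2_eq_square)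
    finally show ?thesis .
  qed
  thus ?thesis using l by linarith
qed

lemma step_b:
  assumes w: "weights_ok w" and ec: "exp_concave D loss \<eta>0"
    and alg: "valid_algorithm D A" and adv: "\<forall>t\<ge>1. \<forall>i. f t i \<in> D"
    and eta: "\<eta>0 > 0" "\<forall>t. \<eta> t = \<eta>0" and t: "t \<ge> 1"
  shows "loss (alg1 loss A w \<eta> y f t) (y t)
           \<le> (1 / \<eta> t) * (ln (Wt loss A w \<eta> y f t) - ln (Vt loss A w \<eta> y f t)) + 0"
proof -
  obtain t' where t': "t = Suc t'" using t by (cases t) auto
  let ?P = "paths t"
  let ?x = "\<lambda>T. fA A y f (tau T t) t"
  obtain q where q0: "\<forall>T\<in>?P. q T \<ge> 0" and q1: "sum q ?P = 1"
    and a: "alg1 loss A w \<eta> y f t = (\<Sum>T\<in>?P. q T *\<^sub>R ?x T)"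
    and v: "(\<Sum>T\<in>?P. q T * exp (- \<eta> t * loss (?x T) (y t))) = Vt loss A w \<eta> y f t / Wt loss A w \<eta> y f t"
    and d: "\<forall>T\<in>?P. ?x T \<in> D"
    using step_common[OF w alg adv, of t' loss \<eta> y] unfolding t'[symmetric] by blast
  have conc: "concave_on D (\<lambda>p. exp (- \<eta>0 * loss p (y t)))" using ec by (simp add: exp_concave_def)
  have "(\<Sum>T\<in>?P. q T * exp (- \<eta>0 * loss (?x T) (y t))) \<le> exp (- \<eta>0 * loss (\<Sum>T\<in>?P. q T *\<^sub>R ?x T) (y t))"
    by (rule concave_on_sum[OF paths_finite paths_ne[OF w] conc]) (use q0 q1 d in auto)
  hence le: "Vt loss A w \<eta> y f t / Wt loss A w \<eta> y f t \<le> exp (- \<eta>0 * loss (alg1 loss A w \<eta> y f t) (y t))"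
    using v a eta by simp
  have VW: "Vt loss A w \<eta> y f t / Wt loss A w \<eta> y f t > 0" using Vt_pos[OF w, of loss A \<eta> y f t] Wt_pos[OF w, of loss A \<eta> y f t] by simp
  have "ln (Vt loss A w \<eta> y f t) - ln (Wt loss A w \<eta> y f t) \<le> - \<eta>0 * loss (alg1 loss A w \<eta> y f t) (y t)"
  proof -
    have "ln (Vt loss A w \<eta> y f t / Wt loss A w \<eta> y f t) \<le> ln (exp (- \<eta>0 * loss (alg1 loss A w \<eta> y f t) (y t)))"
      using le ln_le_cancel_iff[OF VW exp_gt_zero] by blast
    thus ?thesis using Vt_pos[OF w, of loss A \<eta> y f t] Wt_pos[OF w, of loss A \<eta> y f t] by (simp add: ln_div)
  qed
  hence "\<eta>0 * loss (alg1 loss A w \<eta> y f t) (y t) \<le> ln (Wt loss A w \<eta> y f t) - ln (Vt loss A w \<eta> y f t)" by linarith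
  hence "loss (alg1 loss A w \<eta> y f t) (y t) \<le> (ln (Wt loss A w \<eta> y f t) - ln (Vt loss A w \<eta> y f t)) / \<eta>0"
    using eta by (simp add: field_simps)
  thus ?thesis using eta by simp
qed

lemma exp_powr_lem: "a > 0 \<Longrightarrow> exp (- (a * L)) powr (b / a) = exp (- (b * (L::real)))"
  by (simp add: powr_def field_simps)

lemma power_step:
  assumes w: "weights_ok w" and eta: "0 < \<eta> (Suc t)" "\<eta> (Suc t) \<le> \<eta> t"
  shows "(1 / \<eta> (Suc t)) * ln (Wt loss A w \<eta> y f (Suc t)) \<le> (1 / \<eta> t) * ln (Vt loss A w \<eta> y f t)"
proof -
  have W: "Wt loss A w \<eta> y f (Suc t) = (\<Sum>T\<in>paths t. w t T * exp (- \<eta> (Suc t) * LA loss A y f t T))"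
    unfolding Wt_def using consist[OF w, of t "\<lambda>T. exp (- \<eta> (Suc t) * LA loss A y f t T)"] by simp
  have V: "Vt loss A w \<eta> y f t = (\<Sum>T\<in>paths t. w t T * exp (- \<eta> (Suc t) * LA loss A y f t T) powr (\<eta> t / \<eta> (Suc t)))"
    unfolding Vt_def using eta by (intro sum.cong refl) (simp add: exp_powr_lem)
  show ?thesis unfolding W V
    by (rule power_mean_step[OF paths_finite paths_ne[OF w]]) (use w_props[OF w] eta in auto)
qed

lemma telescope:
  assumes w: "weights_ok w" and eta: "\<forall>t. \<eta> t > 0" and mono: "\<forall>t\<in>{1..n-1}. \<eta> (Suc t) \<le> \<eta> t"
  shows "Suc k \<le> n \<Longrightarrow> (\<Sum>t=1..Suc k. (1 / \<eta> t) * (ln (Wt loss A w \<eta> y f t) - ln (Vt loss A w \<eta> y f t)))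
           \<le> - (1 / \<eta> (Suc k)) * ln (Vt loss A w \<eta> y f (Suc k))"
proof (induction k)
  case 0 thus ?case using Wt_1[OF w, of loss A \<eta> y f] by (simp add: algebra_simps)
next
  case (Suc k)
  have IH: "(\<Sum>t=1..Suc k. (1 / \<eta> t) * (ln (Wt loss A w \<eta> y f t) - ln (Vt loss A w \<eta> y f t)))
           \<le> - (1 / \<eta> (Suc k)) * ln (Vt loss A w \<eta> y f (Suc k))" using Suc by simp
  have P: "(1 / \<eta> (Suc (Suc k))) * ln (Wt loss A w \<eta> y f (Suc (Suc k))) \<le> (1 / \<eta> (Suc k)) * ln (Vt loss A w \<eta> y f (Suc k))"
    by (rule power_step[OF w]) (use eta mono Suc.prems in auto)
  show ?case using IH P by (simp add: sum.cl_ivl_Suc algebra_simps)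
qed

lemma main_bound:
  fixes loss :: "'d::real_vector \<Rightarrow> 'y \<Rightarrow> real" and A :: "'y list \<Rightarrow> ('e::finite \<Rightarrow> 'd) list \<Rightarrow> 'd"
  assumes w: "weights_ok w" and eta: "\<forall>t. \<eta> t > 0" and mono: "\<forall>t\<in>{1..n-1}. \<eta> (Suc t) \<le> \<eta> t"
    and n: "n \<ge> 1" and T: "T \<in> paths n" and Th: "Th \<in> paths n" and cov: "set T \<subseteq> set Th"
    and wpos: "w n Th > 0" and reg: "regret_bound D loss A \<rho>" and adv: "\<forall>t\<ge>1. \<forall>i. f t i \<in> D"
    and step: "\<forall>t\<in>{1..n}. loss (alg1 loss A w \<eta> y f t) (y t)
                 \<le> (1 / \<eta> t) * (ln (Wt loss A w \<eta> y f t) - ln (Vt loss A w \<eta> y f t)) + \<beta> t"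
  shows "Lhat loss A w \<eta> y f n - meta_loss loss y f n T a
           \<le> (\<Sum>c=0..length Th. \<rho> (real (bnd Th n (Suc c) - bnd Th n c))) + (\<Sum>t=1..n. \<beta> t) + 1 / \<eta> n * ln (1 / w n Th)"
proof -
  obtain k where k: "n = Suc k" using n by (cases n) auto
  let ?V = "Vt loss A w \<eta> y f n"
  let ?L = "LA loss A y f n Th"
  have "Lhat loss A w \<eta> y f n \<le> (\<Sum>t=1..n. (1 / \<eta> t) * (ln (Wt loss A w \<eta> y f t) - ln (Vt loss A w \<eta> y f t)) + \<beta> t)"
    unfolding Lhat_def by (rule sum_mono) (use step in auto)
  also have "\<dots> = (\<Sum>t=1..n. (1 / \<eta> t) * (ln (Wt loss A w \<eta> y f t) - ln (Vt loss A w \<eta> y f t))) + (\<Sum>t=1..n. \<beta> t)"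
    by (rule sum.distrib)
  also have "\<dots> \<le> - (1 / \<eta> n) * ln ?V + (\<Sum>t=1..n. \<beta> t)"
    using telescope[OF w eta mono, of k loss A y f] k by simp
  also have "- (1 / \<eta> n) * ln ?V \<le> ?L + 1 / \<eta> n * ln (1 / w n Th)"
  proof -
    have "w n Th * exp (- \<eta> n * ?L) \<le> ?V"
      unfolding Vt_def using Th w_props[OF w, of n]
      by (intro member_le_sum[OF Th]) (auto simp: paths_finite)
    hence "ln (w n Th * exp (- \<eta> n * ?L)) \<le> ln ?V"
      using wpos by (subst ln_le_cancel_iff) (auto intro: Vt_pos[OF w])
    hence "ln (w n Th) - \<eta> n * ?L \<le> ln ?V" using wpos by (simp add: ln_mult)
    hence "- ln ?V \<le> \<eta> n * ?L - ln (w n Th)" by linarith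
    hence "(1 / \<eta> n) * (- ln ?V) \<le> (1 / \<eta> n) * (\<eta> n * ?L - ln (w n Th))"
      using eta by (intro mult_left_mono) (auto simp: less_imp_le)
    moreover have "ln (1 / w n Th) = - ln (w n Th)" using wpos by (simp add: ln_div)
    ultimately show ?thesis using eta by (simp add: field_simps)
  qed
  also have "?L \<le> meta_loss loss y f n T a + (\<Sum>c=0..length Th. \<rho> (real (bnd Th n (Suc c) - bnd Th n c)))"
    by (rule LA_bound[OF reg adv T Th cov])
  finally show ?thesis by simp
qed

lemma jensen_part:
  assumes conc: "concave_on {0..} \<rho>" and Th: "Th \<in> paths n"
  shows "(\<Sum>c=0..length Th. \<rho> (real (bnd Th n (Suc c) - bnd Th n c)))
           \<le> real (length Th + 1) * \<rho> (real n / real (length Th + 1))"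
  using rho_jensen[OF conc, of "{0..length Th}" "\<lambda>c. real (bnd Th n (Suc c) - bnd Th n c)"] seg_len_sum[OF Th]
  by simp

theorem lemma1:
  fixes D :: "'d::real_vector set"
    and loss :: "'d \<Rightarrow> 'y \<Rightarrow> real"
    and A :: "'y list \<Rightarrow> ('e::finite \<Rightarrow> 'd) list \<Rightarrow> 'd"
    and \<rho> :: "real \<Rightarrow> real"
    and w :: "nat \<Rightarrow> nat list \<Rightarrow> real"
    and \<eta> :: "nat \<Rightarrow> real"
    and y :: "nat \<Rightarrow> 'y"
    and f :: "nat \<Rightarrow> 'e \<Rightarrow> 'd"
    and n :: nat
    and T Th :: "nat list"
  assumes D: "convex D"
    and loss_convex: "\<forall>yy. convex_on D (\<lambda>p. loss p yy)"
    and rho: "mono_on {0..} \<rho>" "concave_on {0..} \<rho>" "\<rho> 0 = 0" "\<forall>x\<ge>0. \<rho> x \<ge> 0"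
    and alg: "valid_algorithm D A" "regret_bound D loss A \<rho>"
    and weights: "weights_ok w"
    and eta_pos: "\<forall>t. \<eta> t > 0"
    and advice: "\<forall>t\<ge>1. \<forall>i. f t i \<in> D"
    and n: "n \<ge> 1"
    and eta_mono: "\<forall>t\<in>{1..n-1}. \<eta> (Suc t) \<le> \<eta> t"
    and T: "T \<in> paths n" and Th: "Th \<in> paths n" and cov: "covers Th T"
    and wpos: "w n Th > 0"
  shows
    "((\<forall>p\<in>D. \<forall>yy. 0 \<le> loss p yy \<and> loss p yy \<le> 1) \<longrightarrow>
       (\<forall>a::'e list. length a = length T + 1 \<longrightarrow>
          Lhat loss A w \<eta> y f n - meta_loss loss y f n T a
            \<le> (\<Sum>c=0..length Th. \<rho> (real (bnd Th n (Suc c) - bnd Th n c)))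
               + (\<Sum>t=1..n. \<eta> t / 8) + 1 / \<eta> n * ln (1 / w n Th)
          \<and> (\<Sum>c=0..length Th. \<rho> (real (bnd Th n (Suc c) - bnd Th n c)))
               + (\<Sum>t=1..n. \<eta> t / 8) + 1 / \<eta> n * ln (1 / w n Th)
            \<le> real (length Th + 1) * \<rho> (real n / real (length Th + 1))
               + (\<Sum>t=1..n. \<eta> t / 8) + 1 / \<eta> n * ln (1 / w n Th)))
     \<and>
     (\<forall>\<eta>0. \<eta>0 > 0 \<and> exp_concave D loss \<eta>0 \<and> (\<forall>t. \<eta> t = \<eta>0) \<longrightarrow>
       (\<forall>a::'e list. length a = length T + 1 \<longrightarrow>
          Lhat loss A w \<eta> y f n - meta_loss loss y f n T a
            \<le> (\<Sum>c=0..length Th. \<rho> (real (bnd Th n (Suc c) - bnd Th n c)))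
               + 1 / \<eta>0 * ln (1 / w n Th)
          \<and> (\<Sum>c=0..length Th. \<rho> (real (bnd Th n (Suc c) - bnd Th n c)))
               + 1 / \<eta>0 * ln (1 / w n Th)
            \<le> real (length Th + 1) * \<rho> (real n / real (length Th + 1))
               + 1 / \<eta>0 * ln (1 / w n Th)))"
proof -
  have cov': "set T \<subseteq> set Th" using cov by (simp add: covers_def)
  have A: "Lhat loss A w \<eta> y f n - meta_loss loss y f n T a
            \<le> (\<Sum>c=0..length Th. \<rho> (real (bnd Th n (Suc c) - bnd Th n c)))
               + (\<Sum>t=1..n. \<eta> t / 8) + 1 / \<eta> n * ln (1 / w n Th)"
    if bnd: "\<forall>p\<in>D. \<forall>yy. 0 \<le> loss p yy \<and> loss p yy \<le> 1" for a :: "'e list"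
  proof -
    have step: "\<forall>t\<in>{1..n}. loss (alg1 loss A w \<eta> y f t) (y t)
                 \<le> (1 / \<eta> t) * (ln (Wt loss A w \<eta> y f t) - ln (Vt loss A w \<eta> y f t)) + \<eta> t / 8"
      using step_a[OF weights loss_convex alg(1) advice bnd] eta_pos by auto
    show ?thesis
      using main_bound[OF weights eta_pos eta_mono n T Th cov' wpos alg(2) advice step, of a] by simp
  qed
  have B: "Lhat loss A w \<eta> y f n - meta_loss loss y f n T a
            \<le> (\<Sum>c=0..length Th. \<rho> (real (bnd Th n (Suc c) - bnd Th n c)))
               + 1 / \<eta>0 * ln (1 / w n Th)"
    if e: "\<eta>0 > 0" "exp_concave D loss \<eta>0" "\<forall>t. \<eta> t = \<eta>0" for \<eta>0 and a :: "'e list"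
  proof -
    have step: "\<forall>t\<in>{1..n}. loss (alg1 loss A w \<eta> y f t) (y t)
                 \<le> (1 / \<eta> t) * (ln (Wt loss A w \<eta> y f t) - ln (Vt loss A w \<eta> y f t)) + (\<lambda>_. 0) t"
      using step_b[OF weights e(2) alg(1) advice e(1) e(3)] by auto
    show ?thesis
    proof -
      have en: "\<eta> n = \<eta>0" using e(3) by blast
      show ?thesis
        using main_bound[OF weights eta_pos eta_mono n T Th cov' wpos alg(2) advice step, of a] unfolding en by simp
    qed
  qed
  have J: "(\<Sum>c=0..length Th. \<rho> (real (bnd Th n (Suc c) - bnd Th n c)))
           \<le> real (length Th + 1) * \<rho> (real n / real (length Th + 1))"
    by (rule jensen_part[OF rho(2) Th])
  have J1: "(\<Sum>c=0..length Th. \<rho> (real (bnd Th n (Suc c) - bnd Th n c))) + s + k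
           \<le> real (length Th + 1) * \<rho> (real n / real (length Th + 1)) + s + k" for s k :: real
    using J by linarith
  have J2: "(\<Sum>c=0..length Th. \<rho> (real (bnd Th n (Suc c) - bnd Th n c))) + k
           \<le> real (length Th + 1) * \<rho> (real n / real (length Th + 1)) + k" for k :: real
    using J by linarith
  show ?thesis using A B J1 J2 by blast
qed

end
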